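(* Let $D$ be a unique factorization domain and $D'=D_{mult}/\sim$. For every nonzero element $[m]_\sim$ of $D'$, $\tau'_{[m]_\sim}=P_{J([m]_\sim)}$, and hence the factor semigroup $D'/\tau'_{[m]_\sim}$ satisfies Condition $( * )$.
   Context: $D_{mult}$ is the multiplicative semigroup of $D$, $\sim$ the associate congruence, $[x]_\sim$ the class of $x$; $\gcd([a]_\sim,[b]_\sim)=[\gcd(a,b)]_\sim$ in $D'$. $\tau'_{[m]_\sim}$ is the relation on $D'$ with $([a]_\sim,[b]_\sim)\in\tau'_{[m]_\sim}$ iff $\gcd([a]_\sim,[m]_\sim)=\gcd([b]_\sim,[m]_\sim)$. $J([m]_\sim)$ is the ideal of $D'$ generated by $[m]_\sim$. For a semigroup $S$, $H\subseteq S$, $a\in S$: $H\dots a=\{(x,y)\in S\times S: xay\in H\}$, $P_H=\{(a,b)\in S\times S: H\dots a=H\dots b\}$. For a commutative semigroup $S$ with zero $0$, $A(s)=\{x\in S: xs=0\}$. $S$ satisfies Condition $( * )$ if: (1) $S$ is a commutative monoid with a zero; (2) $A(s)\neq\{0\}$ for every non-identity $s$; (3) $A(s)=A(t)$ implies $s=t$. *)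

theory Defs
  imports "HOL-Computational_Algebra.Computational_Algebra"
begin

text \<open>Operation induced on equivalence classes: the class of f a b for a in A, b in B.
  For a congruence r and classes A, B this is exactly the class of f a b.\<close>
definition class_op :: "('a \<times> 'a) set \<Rightarrow> ('a \<Rightarrow> 'a \<Rightarrow> 'a) \<Rightarrow> 'a set \<Rightarrow> 'a set \<Rightarrow> 'a set" where
  "class_op r f A B = (\<Union>a\<in>A. \<Union>b\<in>B. r `` {f a b})"

definition dots :: "'a set \<Rightarrow> ('a \<Rightarrow> 'a \<Rightarrow> 'a) \<Rightarrow> 'a set \<Rightarrow> 'a \<Rightarrow> ('a \<times> 'a) set" where
  "dots S f H a = {(x, y). x \<in> S \<and> y \<in> S \<and> f (f x a) y \<in> H}"

definition P_rel :: "'a set \<Rightarrow> ('a \<Rightarrow> 'a \<Rightarrow> 'a) \<Rightarrow> 'a set \<Rightarrow> ('a \<times> 'a) set" where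
  "P_rel S f H = {(a, b). a \<in> S \<and> b \<in> S \<and> dots S f H a = dots S f H b}"

definition gen_ideal :: "'a set \<Rightarrow> ('a \<Rightarrow> 'a \<Rightarrow> 'a) \<Rightarrow> 'a \<Rightarrow> 'a set" where
  "gen_ideal S f a = {a} \<union> {f x a |x. x \<in> S} \<union> {f a y |y. y \<in> S} \<union> {f (f x a) y |x y. x \<in> S \<and> y \<in> S}"

definition is_identity :: "'a set \<Rightarrow> ('a \<Rightarrow> 'a \<Rightarrow> 'a) \<Rightarrow> 'a \<Rightarrow> bool" where
  "is_identity S f e \<longleftrightarrow> e \<in> S \<and> (\<forall>x\<in>S. f e x = x \<and> f x e = x)"

definition is_zero :: "'a set \<Rightarrow> ('a \<Rightarrow> 'a \<Rightarrow> 'a) \<Rightarrow> 'a \<Rightarrow> bool" where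
  "is_zero S f z \<longleftrightarrow> z \<in> S \<and> (\<forall>x\<in>S. f z x = z \<and> f x z = z)"

definition annih :: "'a set \<Rightarrow> ('a \<Rightarrow> 'a \<Rightarrow> 'a) \<Rightarrow> 'a \<Rightarrow> 'a \<Rightarrow> 'a set" where
  "annih S f z s = {x \<in> S. f x s = z}"

definition is_semigroup :: "'a set \<Rightarrow> ('a \<Rightarrow> 'a \<Rightarrow> 'a) \<Rightarrow> bool" where
  "is_semigroup S f \<longleftrightarrow> (\<forall>x\<in>S. \<forall>y\<in>S. f x y \<in> S) \<and>
     (\<forall>x\<in>S. \<forall>y\<in>S. \<forall>z\<in>S. f (f x y) z = f x (f y z))"

definition condition_star :: "'a set \<Rightarrow> ('a \<Rightarrow> 'a \<Rightarrow> 'a) \<Rightarrow> bool" where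
  "condition_star S f \<longleftrightarrow>
     is_semigroup S f \<and> (\<forall>x\<in>S. \<forall>y\<in>S. f x y = f y x) \<and>
     (\<exists>e z. is_identity S f e \<and> is_zero S f z \<and>
        (\<forall>s\<in>S. s \<noteq> e \<longrightarrow> annih S f z s \<noteq> {z}) \<and>
        (\<forall>s\<in>S. \<forall>t\<in>S. annih S f z s = annih S f z t \<longrightarrow> s = t))"

definition assoc_rel :: "('a::factorial_ring_gcd \<times> 'a) set" where
  "assoc_rel = {(a, b). a dvd b \<and> b dvd a}"

definition assoc_class :: "'a::factorial_ring_gcd \<Rightarrow> 'a set" where
  "assoc_class x = assoc_rel `` {x}"

definition D' :: "'a::factorial_ring_gcd set set" where
  "D' = UNIV // assoc_rel"

definition mult' :: "'a::factorial_ring_gcd set \<Rightarrow> 'a set \<Rightarrow> 'a set" where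
  "mult' = class_op assoc_rel (*)"

definition gcd' :: "'a::factorial_ring_gcd set \<Rightarrow> 'a set \<Rightarrow> 'a set" where
  "gcd' = class_op assoc_rel gcd"

definition tau' :: "'a::factorial_ring_gcd set \<Rightarrow> ('a set \<times> 'a set) set" where
  "tau' M = {(A, B). A \<in> D' \<and> B \<in> D' \<and> gcd' A M = gcd' B M}"

end

theory Submission imports Defs begin

lemma cls_mem: "y \<in> assoc_class x \<longleftrightarrow> x dvd y \<and> y dvd x"
  by (simp add: assoc_class_def assoc_rel_def)

lemma UN_UN_const:
  assumes "x \<in> X" "y \<in> Y" "\<And>A B. A \<in> X \<Longrightarrow> B \<in> Y \<Longrightarrow> F A B = C"
  shows "(\<Union>A\<in>X. \<Union>B\<in>Y. F A B) = C"
  using assms by blast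

lemma cls_eq: "assoc_class a = assoc_class b \<longleftrightarrow> normalize a = normalize b"
proof
  assume "assoc_class a = assoc_class b"
  hence "b \<in> assoc_class a" by (simp add: cls_mem)
  thus "normalize a = normalize b" by (simp add: cls_mem associated_iff_dvd)
next
  assume h: "normalize a = normalize b"
  show "assoc_class a = assoc_class b"
    using h unfolding associated_iff_dvd by (auto simp: cls_mem intro: dvd_trans)
qed

lemma D'_eq: "D' = range assoc_class"
  by (auto simp: D'_def quotient_def assoc_class_def)

lemma cls_in: "assoc_class x \<in> D'"
  by (simp add: D'_eq)

lemma class_op_cls:
  assumes "\<And>a a' b b'. normalize a = normalize a' \<Longrightarrow> normalize b = normalize b' \<Longrightarrow> normalize (f a b) = normalize (f a' b')"
  shows "class_op assoc_rel f (assoc_class a) (assoc_class b) = assoc_class (f a b)"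
proof -
  have "assoc_rel `` {f a' b'} = assoc_class (f a b)" if "a' \<in> assoc_class a" "b' \<in> assoc_class b" for a' b'
  proof -
    have "normalize a = normalize a'" "normalize b = normalize b'" using that by (auto simp: cls_mem associated_iff_dvd)
    hence "normalize (f a b) = normalize (f a' b')" by (rule assms)
    thus ?thesis by (metis assoc_class_def cls_eq)
  qed
  moreover have "a \<in> assoc_class a" "b \<in> assoc_class b" by (auto simp: cls_mem)
  ultimately show ?thesis unfolding class_op_def by (rule UN_UN_const[rotated 2])
qed

lemma mult'_cls: "mult' (assoc_class a) (assoc_class b) = assoc_class (a * b)"
  unfolding mult'_def
proof (rule class_op_cls)
  fix a a' b b' :: 'a
  assume h: "normalize a = normalize a'" "normalize b = normalize b'"
  have d: "a dvd a'" "a' dvd a" "b dvd b'" "b' dvd b" using h by (simp_all only: associated_iff_dvd)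
  show "normalize (a * b) = normalize (a' * b')" unfolding associated_iff_dvd
    using mult_dvd_mono[OF d(1) d(3)] mult_dvd_mono[OF d(2) d(4)] by (rule conjI)
qed

lemma gcd'_cls: "gcd' (assoc_class a) (assoc_class b) = assoc_class (gcd a b)"
  unfolding gcd'_def
proof (rule class_op_cls)
  fix a a' b b' :: 'a assume h: "normalize a = normalize a'" "normalize b = normalize b'"
  have "gcd a b = gcd (normalize a) (normalize b)" by (simp only: gcd.normalize_left_idem gcd.normalize_right_idem)
  also have "\<dots> = gcd a' b'" by (simp only: h gcd.normalize_left_idem gcd.normalize_right_idem)
  finally show "normalize (gcd a b) = normalize (gcd a' b')" by simp
qed

lemma key:
  fixes m a :: "'a::factorial_ring_gcd"
  shows "m dvd c * a \<longleftrightarrow> m dvd c * gcd a m"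
proof -
  have "m dvd c * a \<longleftrightarrow> m dvd gcd (c*a) (c*m)" by simp
  also have "gcd (c*a) (c*m) = normalize (c * gcd a m)" by (rule gcd_mult_left)
  finally show ?thesis by simp
qed

lemma key2:
  fixes m a b :: "'a::factorial_ring_gcd"
  assumes "m \<noteq> 0"
  shows "gcd a m = gcd b m \<longleftrightarrow> (\<forall>c. m dvd c * a \<longleftrightarrow> m dvd c * b)"
proof
  assume "gcd a m = gcd b m" then show "\<forall>c. m dvd c * a \<longleftrightarrow> m dvd c * b"
  proof (intro allI)
    fix c assume "gcd a m = gcd b m"
    show "m dvd c * a \<longleftrightarrow> m dvd c * b" using key[of m c a] key[of m c b] \<open>gcd a m = gcd b m\<close> by simp
  qed
next
  assume H: "\<forall>c. m dvd c * a \<longleftrightarrow> m dvd c * b"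
  have *: "gcd x m dvd gcd y m" if H: "\<forall>c. m dvd c * x \<longrightarrow> m dvd c * y" for x y :: 'a
  proof -
    obtain c where c: "m = gcd x m * c" by (meson dvd_def gcd_dvd2)
    have "c \<noteq> 0" using c assms by auto
    obtain k where k: "x = gcd x m * k" by (meson dvd_def gcd_dvd1)
    have "c * x = (gcd x m * c) * k" by (subst k) (simp add: ac_simps)
    hence "c * x = m * k" using c by simp
    hence "m dvd c * x" by simp
    hence "m dvd c * y" using H by blast
    hence "m dvd c * gcd y m" using key by blast
    hence "c * gcd x m dvd c * gcd y m" using c by (metis mult.commute)
    thus ?thesis using \<open>c \<noteq> 0\<close> dvd_mult_cancel_left by blast
  qed
  show "gcd a m = gcd b m"
  proof (rule associated_eqI)
    show "gcd a m dvd gcd b m" by (rule *) (use H in blast)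
    show "gcd b m dvd gcd a m" by (rule *) (use H in blast)
  qed simp_all
qed

lemma tau_cls: "(assoc_class a, assoc_class b) \<in> tau' (assoc_class m) \<longleftrightarrow> gcd a m = gcd b m"
  by (simp add: tau'_def D'_eq gcd'_cls cls_eq)

lemma equiv_tau: "equiv D' (tau' M)"
  unfolding equiv_def refl_on_def sym_def trans_def tau'_def by auto

definition Qc :: "'a::factorial_ring_gcd \<Rightarrow> 'a \<Rightarrow> 'a set set" where
  "Qc m a = tau' (assoc_class m) `` {assoc_class a}"

lemma Qc_eq: "Qc m a = Qc m b \<longleftrightarrow> gcd a m = gcd b m"
  unfolding Qc_def
  by (subst eq_equiv_class_iff[OF equiv_tau]) (auto simp: D'_eq tau_cls)

lemma quot_eq: "D' // tau' (assoc_class m) = range (Qc m)"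
  by (auto simp: quotient_def D'_eq Qc_def)

lemma Qc_mem: "X \<in> Qc m a \<longleftrightarrow> (\<exists>b. X = assoc_class b \<and> gcd a m = gcd b m)"
proof
  assume "X \<in> Qc m a"
  hence "(assoc_class a, X) \<in> tau' (assoc_class m)" by (simp add: Qc_def)
  moreover then obtain b where "X = assoc_class b" by (auto simp: tau'_def D'_eq)
  ultimately show "\<exists>b. X = assoc_class b \<and> gcd a m = gcd b m" using tau_cls by blast
qed (auto simp: Qc_def tau_cls)

lemma cong_mult:
  fixes m :: "'a::factorial_ring_gcd"
  assumes "m \<noteq> 0" "gcd a m = gcd a' m" "gcd b m = gcd b' m"
  shows "gcd (a*b) m = gcd (a'*b') m"
proof -
  have A: "\<forall>c. m dvd c * a \<longleftrightarrow> m dvd c * a'" using key2[OF assms(1)] assms(2) by blast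
  have B: "\<forall>c. m dvd c * b \<longleftrightarrow> m dvd c * b'" using key2[OF assms(1)] assms(3) by blast
  have "m dvd c * (a*b) \<longleftrightarrow> m dvd c * (a'*b')" for c
  proof -
    have "m dvd c * (a*b) \<longleftrightarrow> m dvd (c*b) * a" by (simp add: ac_simps)
    also have "\<dots> \<longleftrightarrow> m dvd (c*b) * a'" using A by blast
    also have "\<dots> \<longleftrightarrow> m dvd (c*a') * b" by (simp add: ac_simps)
    also have "\<dots> \<longleftrightarrow> m dvd (c*a') * b'" using B by blast
    also have "\<dots> \<longleftrightarrow> m dvd c * (a'*b')" by (simp add: ac_simps)
    finally show ?thesis .
  qed
  thus ?thesis using key2[OF assms(1)] by blast
qed

lemma Qc_op:
  fixes m :: "'a::factorial_ring_gcd"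
  assumes "m \<noteq> 0"
  shows "class_op (tau' (assoc_class m)) mult' (Qc m a) (Qc m b) = Qc m (a*b)"
proof -
  have "tau' (assoc_class m) `` {mult' A B} = Qc m (a*b)" if hA: "A \<in> Qc m a" and hB: "B \<in> Qc m b" for A B
  proof -
    obtain a' where a': "A = assoc_class a'" "gcd a m = gcd a' m" using Qc_mem[THEN iffD1, OF hA] by (elim exE conjE)
    obtain b' where b': "B = assoc_class b'" "gcd b m = gcd b' m" using Qc_mem[THEN iffD1, OF hB] by (elim exE conjE)
    note ab = a'(1,2) b'(1,2)
    have "tau' (assoc_class m) `` {mult' A B} = Qc m (a'*b')" unfolding ab(1) ab(3) mult'_cls Qc_def by (rule refl)
    also have "\<dots> = Qc m (a*b)" by (rule iffD2[OF Qc_eq], rule sym[OF cong_mult[OF assms ab(2) ab(4)]])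
    finally show ?thesis .
  qed
  moreover have "assoc_class a \<in> Qc m a" "assoc_class b \<in> Qc m b" unfolding Qc_mem by blast+
  ultimately show ?thesis unfolding class_op_def by (rule UN_UN_const[rotated 2])
qed

lemma dvd_gcd_normalize: "(m::'a::factorial_ring_gcd) dvd z \<longleftrightarrow> gcd z m = gcd 0 m"
  using gcd_proj2_iff[of z m] by simp

lemma annih_Qc:
  fixes m :: "'a::factorial_ring_gcd"
  assumes "m \<noteq> 0"
  shows "Qc m c \<in> annih (range (Qc m)) (class_op (tau' (assoc_class m)) mult') (Qc m 0) (Qc m a)
     \<longleftrightarrow> m dvd c * a"
proof -
  have "Qc m c \<in> annih (range (Qc m)) (class_op (tau' (assoc_class m)) mult') (Qc m 0) (Qc m a)
     \<longleftrightarrow> Qc m (c*a) = Qc m 0" by (simp only: annih_def mem_Collect_eq Qc_op[OF assms] rangeI simp_thms)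
  also have "\<dots> \<longleftrightarrow> gcd (c*a) m = gcd 0 m" by (rule Qc_eq)
  also have "\<dots> \<longleftrightarrow> m dvd c * a" by (rule dvd_gcd_normalize[symmetric])
  finally show ?thesis .
qed

lemma star:
  fixes m :: "'a::factorial_ring_gcd"
  assumes m0: "m \<noteq> 0"
  shows "condition_star (range (Qc m)) (class_op (tau' (assoc_class m)) mult')"
proof -
  let ?f = "class_op (tau' (assoc_class m)) mult'"
  let ?S = "range (Qc m)"
  have op: "?f (Qc m a) (Qc m b) = Qc m (a*b)" for a b by (rule Qc_op[OF m0])
  have sg: "is_semigroup ?S ?f"
    unfolding is_semigroup_def by (auto simp: op mult.assoc)
  have comm: "\<forall>x\<in>?S. \<forall>y\<in>?S. ?f x y = ?f y x" by (auto simp: op mult.commute)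
  have e: "is_identity ?S ?f (Qc m 1)" unfolding is_identity_def by (auto simp: op)
  have z: "is_zero ?S ?f (Qc m 0)" unfolding is_zero_def by (auto simp: op)
  have two: "annih ?S ?f (Qc m 0) s \<noteq> {Qc m 0}" if sS: "s \<in> ?S" and sne: "s \<noteq> Qc m 1" for s
  proof -
    obtain a where a: "s = Qc m a" using sS by blast
    have g1: "gcd a m \<noteq> 1" using sne a Qc_eq[of m a 1] by auto
    obtain c where c: "m = gcd a m * c" by (meson dvd_def gcd_dvd2)
    have c0: "c \<noteq> 0" using c m0 by auto
    obtain k where k: "a = gcd a m * k" by (meson dvd_def gcd_dvd1)
    have "c * a = (gcd a m * c) * k" by (subst k) (simp add: ac_simps)
    hence "c * a = m * k" using c by simp
    hence "m dvd c * a" by simp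
    hence in1: "Qc m c \<in> annih ?S ?f (Qc m 0) s" using annih_Qc[OF m0] a by blast
    have "Qc m c \<noteq> Qc m 0"
    proof
      assume "Qc m c = Qc m 0"
      hence "gcd c m = gcd 0 m" by (simp only: Qc_eq)
      hence "m dvd c" by (simp only: dvd_gcd_normalize)
      moreover have "c * gcd a m = m" using c by (simp only: mult.commute)
      ultimately have "c * gcd a m dvd c * 1" by simp
      hence "is_unit (gcd a m)" using c0 dvd_mult_cancel_left by blast
      thus False using g1 by (simp only: is_unit_gcd_iff)
    qed
    thus ?thesis using in1 by blast
  qed
  have three: "s = t" if sS: "s \<in> ?S" and tS: "t \<in> ?S" and an: "annih ?S ?f (Qc m 0) s = annih ?S ?f (Qc m 0) t" for s t
  proof -
    obtain a b where ab: "s = Qc m a" "t = Qc m b" using sS tS by blast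
    have "\<forall>c. m dvd c * a \<longleftrightarrow> m dvd c * b"
    proof
      fix c
      have "m dvd c * a \<longleftrightarrow> Qc m c \<in> annih ?S ?f (Qc m 0) s" unfolding ab by (rule annih_Qc[OF m0, symmetric])
      also have "\<dots> \<longleftrightarrow> Qc m c \<in> annih ?S ?f (Qc m 0) t" by (simp only: an)
      also have "\<dots> \<longleftrightarrow> m dvd c * b" unfolding ab by (rule annih_Qc[OF m0])
      finally show "m dvd c * a \<longleftrightarrow> m dvd c * b" .
    qed
    hence "gcd a m = gcd b m" using key2[OF m0] by blast
    thus ?thesis unfolding ab by (simp only: Qc_eq)
  qed
  have "\<exists>e z. is_identity ?S ?f e \<and> is_zero ?S ?f z \<and>
        (\<forall>s\<in>?S. s \<noteq> e \<longrightarrow> annih ?S ?f z s \<noteq> {z}) \<and>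
        (\<forall>s\<in>?S. \<forall>t\<in>?S. annih ?S ?f z s = annih ?S ?f z t \<longrightarrow> s = t)"
    apply (rule exI[of _ "Qc m 1"], rule exI[of _ "Qc m 0"])
    apply (intro conjI e z ballI impI)
     apply (erule (1) two)
    apply (erule (2) three)
    done
  then show ?thesis unfolding condition_star_def using sg comm by (intro conjI)
qed

lemma gen_ideal_sub:
  assumes "X \<in> gen_ideal D' mult' (assoc_class m)"
  shows "\<exists>y. X = assoc_class (m * y)"
proof -
  have D: "\<exists>x'. x = assoc_class x'" if "x \<in> D'" for x using that unfolding D'_eq by blast
  from assms consider (a) "X = assoc_class m"
    | (b) x where "x \<in> D'" "X = mult' x (assoc_class m)"
    | (c) y where "y \<in> D'" "X = mult' (assoc_class m) y"
    | (d) x y where "x \<in> D'" "y \<in> D'" "X = mult' (mult' x (assoc_class m)) y"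
    unfolding gen_ideal_def by blast
  then show ?thesis
  proof cases
    case a
    then have "X = assoc_class (m * 1)" by simp
    then show ?thesis ..
  next
    case b
    then obtain x' where "x = assoc_class x'" using D by blast
    then have "X = assoc_class (m * x')" using b by (simp add: mult'_cls mult.commute)
    then show ?thesis ..
  next
    case c
    then obtain y' where "y = assoc_class y'" using D by blast
    then have "X = assoc_class (m * y')" using c by (simp add: mult'_cls)
    then show ?thesis ..
  next
    case d
    then obtain x' y' where "x = assoc_class x'" "y = assoc_class y'" using D by blast
    then have "X = assoc_class (m * (x' * y'))" using d by (simp add: mult'_cls ac_simps)
    then show ?thesis ..
  qed
qed

lemma gen_ideal_mem: "assoc_class z \<in> gen_ideal D' mult' (assoc_class m) \<longleftrightarrow> m dvd z"
proof
  assume "assoc_class z \<in> gen_ideal D' mult' (assoc_class m)"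
  then obtain y where y: "assoc_class z = assoc_class (m * y)" using gen_ideal_sub by blast
  hence "normalize z = normalize (m * y)" by (simp only: cls_eq)
  hence "m * y dvd z" by (simp only: associated_iff_dvd)
  thus "m dvd z" using dvd_mult_left by blast
next
  assume "m dvd z"
  then obtain y where "z = m * y" by (elim dvdE)
  hence "assoc_class z = mult' (assoc_class y) (assoc_class m)" by (simp add: mult'_cls mult.commute)
  moreover have "assoc_class y \<in> D'" by (rule cls_in)
  ultimately show "assoc_class z \<in> gen_ideal D' mult' (assoc_class m)"
    unfolding gen_ideal_def by blast
qed

lemma dots_cls:
  "(assoc_class x, assoc_class y) \<in> dots D' mult' (gen_ideal D' mult' (assoc_class m)) (assoc_class a)
    \<longleftrightarrow> m dvd x * a * y"
proof -
  have "assoc_class z \<in> D'" for z :: 'a by (simp add: D'_eq)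
  thus ?thesis by (simp add: dots_def mult'_cls gen_ideal_mem)
qed

lemma part1:
  fixes m :: "'a::factorial_ring_gcd"
  assumes m0: "m \<noteq> 0"
  shows "tau' (assoc_class m) = P_rel D' mult' (gen_ideal D' mult' (assoc_class m))"
proof -
  let ?H = "gen_ideal D' mult' (assoc_class m)"
  have eqv: "(assoc_class a, assoc_class b) \<in> P_rel D' mult' ?H \<longleftrightarrow> gcd a m = gcd b m" for a b
  proof -
    have sub: "dots D' mult' ?H A \<subseteq> D' \<times> D'" for A by (auto simp: dots_def)
    have "dots D' mult' ?H (assoc_class a) = dots D' mult' ?H (assoc_class b)
      \<longleftrightarrow> (\<forall>x y. m dvd x * a * y \<longleftrightarrow> m dvd x * b * y)"
    proof
      assume h: "dots D' mult' ?H (assoc_class a) = dots D' mult' ?H (assoc_class b)"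
      show "\<forall>x y. m dvd x * a * y \<longleftrightarrow> m dvd x * b * y"
        using h dots_cls by metis
    next
      assume h: "\<forall>x y. m dvd x * a * y \<longleftrightarrow> m dvd x * b * y"
      show "dots D' mult' ?H (assoc_class a) = dots D' mult' ?H (assoc_class b)"
      proof (rule set_eqI)
        fix p show "p \<in> dots D' mult' ?H (assoc_class a) \<longleftrightarrow> p \<in> dots D' mult' ?H (assoc_class b)"
        proof (cases "p \<in> D' \<times> D'")
          case True
          then obtain x y where "p = (assoc_class x, assoc_class y)" by (auto simp: D'_eq)
          thus ?thesis using h dots_cls by metis
        next
          case False thus ?thesis using sub by blast
        qed
      qed
    qed
    also have "\<dots> \<longleftrightarrow> (\<forall>c. m dvd c * a \<longleftrightarrow> m dvd c * b)"
    proof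
      assume "\<forall>x y. m dvd x * a * y \<longleftrightarrow> m dvd x * b * y"
      thus "\<forall>c. m dvd c * a \<longleftrightarrow> m dvd c * b" by (metis mult_1_right)
    next
      assume h: "\<forall>c. m dvd c * a \<longleftrightarrow> m dvd c * b"
      show "\<forall>x y. m dvd x * a * y \<longleftrightarrow> m dvd x * b * y"
      proof (intro allI)
        fix x y
        have e1: "x * a * y = (x*y) * a" "x * b * y = (x*y) * b" by (simp_all add: ac_simps)
        show "m dvd x * a * y \<longleftrightarrow> m dvd x * b * y" unfolding e1 using h by (rule spec)
      qed
    qed
    also have "\<dots> \<longleftrightarrow> gcd a m = gcd b m" using key2[OF m0] by blast
    finally have "dots D' mult' ?H (assoc_class a) = dots D' mult' ?H (assoc_class b) \<longleftrightarrow> gcd a m = gcd b m" .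
    moreover have "(assoc_class a, assoc_class b) \<in> P_rel D' mult' ?H \<longleftrightarrow>
       dots D' mult' ?H (assoc_class a) = dots D' mult' ?H (assoc_class b)"
      unfolding P_rel_def using cls_in by blast
    ultimately show ?thesis by (rule trans[rotated])
  qed
  have "tau' (assoc_class m) \<subseteq> D' \<times> D'" "P_rel D' mult' ?H \<subseteq> D' \<times> D'"
    by (auto simp: tau'_def P_rel_def)
  show ?thesis
  proof (rule set_eqI)
    fix p
    show "p \<in> tau' (assoc_class m) \<longleftrightarrow> p \<in> P_rel D' mult' ?H"
    proof (cases "p \<in> D' \<times> D'")
      case True
      then obtain a b where p: "p = (assoc_class a, assoc_class b)" by (auto simp: D'_eq)
      show ?thesis unfolding p tau_cls eqv ..
    next
      case False thus ?thesis using \<open>tau' (assoc_class m) \<subseteq> D' \<times> D'\<close> \<open>P_rel D' mult' ?H \<subseteq> D' \<times> D'\<close> by blast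
    qed
  qed
qed

theorem corollary3:
  fixes m :: "'a::factorial_ring_gcd"
  assumes "assoc_class m \<noteq> assoc_class 0"
  shows "tau' (assoc_class m) = P_rel D' mult' (gen_ideal D' mult' (assoc_class m))
    \<and> condition_star (D' // tau' (assoc_class m)) (class_op (tau' (assoc_class m)) mult')"
proof -
  have m0: "m \<noteq> 0" using assms by auto
  show ?thesis
  proof (rule conjI)
    show "tau' (assoc_class m) = P_rel D' mult' (gen_ideal D' mult' (assoc_class m))" by (rule part1[OF m0])
    show "condition_star (D' // tau' (assoc_class m)) (class_op (tau' (assoc_class m)) mult')"
      unfolding quot_eq by (rule star[OF m0])
  qed
qed

end
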